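(* Let $\mathcal{G}$ be a connected undirected network graph with a given set of monitors, let $\mathcal{B}$ be a biconnected component of $\mathcal{G}$, and let $\mathcal{T}$ be a triconnected component of $\mathcal{B}$ with vantages $\{\mu_i\}$. Then for each vantage $\mu_i$ there exists an external $\mu_i$-to-agent path $\mathcal{P}_i$ (where $\mathcal{P}_i$ is the degenerate single-node path $\mu_i$ if $\mu_i$ is an agent) such that $\mathcal{P}_i$ is internally vertex disjoint from all the other $\mu_j$-to-agent paths $\mathcal{P}_j$, $j\neq i$.
   Context: $\mathcal{G}$ is an undirected connected graph; some nodes are monitors. A biconnected component is a maximal 2-vertex-connected subgraph (or a bridge). For a biconnected component $\mathcal{B}$, a node $v\in V(\mathcal{B})$ is an agent of $\mathcal{B}$ if $v$ is a monitor, or $v$ is a cut-vertex of $\mathcal{G}$ through which $\mathcal{B}$ is connected to a monitor outside $\mathcal{B}$. The triconnected components of $\mathcal{B}$ are obtained by the standard (Hopcroft–Tarjan) decomposition: repeatedly splitting along 2-vertex cuts $\{a,b\}$, adding a virtual link $ab$ to each side, until every piece is 3-vertex-connected, a triangle, or a single link. For a triconnected component $\mathcal{T}$ of $\mathcal{B}$, a node of $\mathcal{T}$ is a vantage if it is an agent of $\mathcal{B}$, or it belongs to a 2-vertex cut $\{a,b\}\subseteq V(\mathcal{T})$ of $\mathcal{B}$ that separates $\mathcal{T}$ from some agent of $\mathcal{B}$. An external $\mu$-to-agent path is a path in $\mathcal{G}$ from the vantage $\mu$ to an agent of $\mathcal{B}$ none of whose vertices other than $\mu$ lies in $\mathcal{T}$.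 Two paths are internally vertex disjoint if no internal vertex of either path lies on the other path (they may share end-points). *)

theory Defs
  imports Main
begin

definition graph :: "'a set \<Rightarrow> 'a set set \<Rightarrow> bool" where
  "graph V E \<longleftrightarrow> finite V \<and> (\<forall>e\<in>E. \<exists>u v. e = {u, v} \<and> u \<noteq> v \<and> u \<in> V \<and> v \<in> V)"

definition is_path :: "'a set \<Rightarrow> 'a set set \<Rightarrow> 'a list \<Rightarrow> bool" where
  "is_path V E p \<longleftrightarrow> p \<noteq> [] \<and> distinct p \<and> set p \<subseteq> V \<and>
     (\<forall>i. Suc i < length p \<longrightarrow> {p ! i, p ! Suc i} \<in> E)"

definition induced :: "'a set set \<Rightarrow> 'a set \<Rightarrow> 'a set set" where
  "induced E S = {e \<in> E. e \<subseteq> S}"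

definition reachable :: "'a set \<Rightarrow> 'a set set \<Rightarrow> 'a \<Rightarrow> 'a \<Rightarrow> bool" where
  "reachable V E u v \<longleftrightarrow> (\<exists>p. is_path V E p \<and> hd p = u \<and> last p = v)"

definition connected_graph :: "'a set \<Rightarrow> 'a set set \<Rightarrow> bool" where
  "connected_graph V E \<longleftrightarrow> (\<forall>u\<in>V. \<forall>v\<in>V. reachable V E u v)"

definition two_connected :: "'a set \<Rightarrow> 'a set set \<Rightarrow> bool" where
  "two_connected V E \<longleftrightarrow> card V \<ge> 3 \<and> connected_graph V E \<and>
     (\<forall>x\<in>V. connected_graph (V - {x}) (induced E (V - {x})))"

definition three_connected :: "'a set \<Rightarrow> 'a set set \<Rightarrow> bool" where
  "three_connected V E \<longleftrightarrow> card V \<ge> 4 \<and>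
     (\<forall>X. X \<subseteq> V \<and> card X \<le> 2 \<longrightarrow> connected_graph (V - X) (induced E (V - X)))"

definition bridge :: "'a set \<Rightarrow> 'a set set \<Rightarrow> 'a set \<Rightarrow> bool" where
  "bridge V E e \<longleftrightarrow> e \<in> E \<and> \<not> connected_graph V (E - {e})"

definition cut_vertex :: "'a set \<Rightarrow> 'a set set \<Rightarrow> 'a \<Rightarrow> bool" where
  "cut_vertex V E v \<longleftrightarrow> v \<in> V \<and> \<not> connected_graph (V - {v}) (induced E (V - {v}))"

definition biconnected_component :: "'a set \<Rightarrow> 'a set set \<Rightarrow> 'a set \<Rightarrow> bool" where
  "biconnected_component V E S \<longleftrightarrow> S \<subseteq> V \<and>
     ((two_connected S (induced E S) \<and>
        (\<forall>S'. S \<subset> S' \<and> S' \<subseteq> V \<longrightarrow> \<not> two_connected S' (induced E S')))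
      \<or> (\<exists>u v. S = {u, v} \<and> bridge V E {u, v}))"

definition agent :: "'a set \<Rightarrow> 'a set set \<Rightarrow> 'a set \<Rightarrow> 'a set \<Rightarrow> 'a \<Rightarrow> bool" where
  "agent V E M S v \<longleftrightarrow> v \<in> S \<and>
     (v \<in> M \<or> (cut_vertex V E v \<and>
        (\<exists>m\<in>M. m \<notin> S \<and> (\<exists>p. is_path V E p \<and> hd p = v \<and> last p = m \<and> set (tl p) \<inter> S = {}))))"

text \<open>Pieces of the (Hopcroft--Tarjan style) splitting of the graph (VB,EB):
  split a piece (W,F) along a 2-vertex cut {a,b}, separating W - {a,b} into two nonempty
  parts C, D with no edge between them; the C-side is C \<union> {a,b} with the induced edges plus
  the virtual link ab (the D-side is obtained by the same rule with C, D swapped).\<close>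
inductive split_piece :: "'a set \<Rightarrow> 'a set set \<Rightarrow> 'a set \<Rightarrow> 'a set set \<Rightarrow> bool"
  for VB :: "'a set" and EB :: "'a set set" where
  base: "split_piece VB EB VB EB"
| step: "\<lbrakk> split_piece VB EB W F; a \<in> W; b \<in> W; a \<noteq> b; C \<subseteq> W - {a, b}; C \<noteq> {};
           W - {a, b} - C \<noteq> {};
           \<forall>e\<in>F. \<not> (e \<inter> C \<noteq> {} \<and> e \<inter> (W - {a, b} - C) \<noteq> {}) \<rbrakk>
         \<Longrightarrow> split_piece VB EB (C \<union> {a, b}) (insert {a, b} (induced F (C \<union> {a, b})))"

definition triconnected_component :: "'a set \<Rightarrow> 'a set set \<Rightarrow> 'a set \<Rightarrow> 'a set set \<Rightarrow> bool" where
  "triconnected_component VB EB W F \<longleftrightarrow> split_piece VB EB W F \<and>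
     (three_connected W F
      \<or> (\<exists>x y z. x \<noteq> y \<and> y \<noteq> z \<and> x \<noteq> z \<and> W = {x, y, z} \<and> F = {{x, y}, {y, z}, {x, z}})
      \<or> (\<exists>x y. x \<noteq> y \<and> W = {x, y} \<and> F = {{x, y}}))"

definition two_vertex_cut :: "'a set \<Rightarrow> 'a set set \<Rightarrow> 'a \<Rightarrow> 'a \<Rightarrow> bool" where
  "two_vertex_cut VB EB a b \<longleftrightarrow> a \<noteq> b \<and> a \<in> VB \<and> b \<in> VB \<and>
     \<not> connected_graph (VB - {a, b}) (induced EB (VB - {a, b}))"

definition vantage :: "'a set \<Rightarrow> 'a set set \<Rightarrow> 'a set \<Rightarrow> 'a set \<Rightarrow> 'a set \<Rightarrow> 'a \<Rightarrow> bool" where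
  "vantage V E M S W v \<longleftrightarrow> v \<in> W \<and>
     (agent V E M S v \<or>
      (\<exists>a b. v \<in> {a, b} \<and> a \<in> W \<and> b \<in> W \<and> two_vertex_cut S (induced E S) a b \<and>
         (\<exists>x. agent V E M S x \<and> x \<in> S - {a, b} \<and>
            (\<forall>y\<in>W - {a, b}. \<not> reachable (S - {a, b}) (induced E (S - {a, b})) y x))))"

definition external_path :: "'a set \<Rightarrow> 'a set set \<Rightarrow> 'a set \<Rightarrow> 'a set \<Rightarrow> 'a set \<Rightarrow> 'a \<Rightarrow> 'a list \<Rightarrow> bool" where
  "external_path V E M S W \<mu> p \<longleftrightarrow> is_path V E p \<and> hd p = \<mu> \<and> agent V E M S (last p) \<and>
     set (tl p) \<inter> W = {}"

definition internal :: "'a list \<Rightarrow> 'a set" where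
  "internal p = set (butlast (tl p))"

definition internally_disjoint :: "'a list \<Rightarrow> 'a list \<Rightarrow> bool" where
  "internally_disjoint p q \<longleftrightarrow> internal p \<inter> set q = {} \<and> internal q \<inter> set p = {}"

end

theory Submission
  imports Defs
begin



definition pth :: "'a set set \<Rightarrow> 'a list \<Rightarrow> bool" where
  "pth E p \<longleftrightarrow> p \<noteq> [] \<and> distinct p \<and> successively (\<lambda>u v. {u, v} \<in> E) p"

lemma is_path_pth: "is_path V E p \<longleftrightarrow> pth E p \<and> set p \<subseteq> V"
  unfolding is_path_def pth_def successively_conv_nth by blast

lemma is_path_induced: "is_path X (induced E X) p \<longleftrightarrow> pth E p \<and> set p \<subseteq> X"
proof -
  have "successively (\<lambda>u v. {u, v} \<in> induced E X) p \<longleftrightarrow> successively (\<lambda>u v. {u, v} \<in> E) p"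
    if "set p \<subseteq> X" using that by (intro successively_cong) (auto simp: induced_def)
  then show ?thesis unfolding is_path_pth pth_def by blast
qed

lemma induced_induced: "X \<subseteq> S \<Longrightarrow> induced (induced E S) X = induced E X"
  unfolding induced_def by auto

lemma sym_edge: "{u, v} = {v, u}" by auto

lemma pth_single[simp]: "pth E [v]" by (simp add: pth_def)

lemma pth_rev: "pth E p \<Longrightarrow> pth E (rev p)"
  unfolding pth_def by (simp add: insert_commute)

lemma pth_appendD1: "pth E (p @ q) \<Longrightarrow> p \<noteq> [] \<Longrightarrow> pth E p"
  unfolding pth_def by (simp add: successively_append_iff)

lemma pth_appendD2: "pth E (p @ q) \<Longrightarrow> q \<noteq> [] \<Longrightarrow> pth E q"
  unfolding pth_def by (simp add: successively_append_iff)

lemma pth_append_edge: "pth E (p @ q) \<Longrightarrow> p \<noteq> [] \<Longrightarrow> q \<noteq> [] \<Longrightarrow> {last p, hd q} \<in> E"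
  unfolding pth_def by (simp add: successively_append_iff)

lemma pth_append: "pth E p \<Longrightarrow> pth E q \<Longrightarrow> {last p, hd q} \<in> E \<Longrightarrow> set p \<inter> set q = {} \<Longrightarrow> pth E (p @ q)"
  unfolding pth_def by (simp add: successively_append_iff)

lemma pth_join: "pth E p \<Longrightarrow> pth E q \<Longrightarrow> last p = hd q \<Longrightarrow> set p \<inter> set (tl q) = {} \<Longrightarrow> pth E (p @ tl q)"
proof -
  assume a: "pth E p" "pth E q" "last p = hd q" "set p \<inter> set (tl q) = {}"
  show ?thesis
  proof (cases "tl q = []")
    case True then show ?thesis using a by simp
  next
    case False
    then obtain v w q' where q: "q = v # w # q'" using a(2) unfolding pth_def
      by (metis list.collapse)
    have "{last p, hd (tl q)} \<in> E" using a(2,3) q unfolding pth_def by simp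
    moreover have "pth E (tl q)" using a(2) q unfolding pth_def by simp
    ultimately show ?thesis using a by (intro pth_append) auto
  qed
qed

lemma pth_Cons: "pth E (u # p) \<longleftrightarrow> u \<notin> set p \<and> (p = [] \<or> ({u, hd p} \<in> E \<and> pth E p))"
  unfolding pth_def by (auto simp: successively_Cons)

definition adj :: "'a set set \<Rightarrow> 'a set \<Rightarrow> ('a \<times> 'a) set" where
  "adj E X = {(u, v). u \<in> X \<and> v \<in> X \<and> {u, v} \<in> E}"

definition vcomp :: "'a set set \<Rightarrow> 'a set \<Rightarrow> 'a \<Rightarrow> 'a set" where
  "vcomp E X x = {v. (x, v) \<in> (adj E X)\<^sup>*}"

lemma adj_sym_rt: "(u, v) \<in> (adj E X)\<^sup>* \<Longrightarrow> (v, u) \<in> (adj E X)\<^sup>*"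
proof (induction rule: rtrancl_induct)
  case base then show ?case by simp
next
  case (step y z)
  then have "(z, y) \<in> adj E X" by (auto simp: adj_def insert_commute)
  then show ?case using step by (meson converse_rtrancl_into_rtrancl)
qed

lemma rt_in: "(u, v) \<in> (adj E X)\<^sup>* \<Longrightarrow> u \<in> X \<Longrightarrow> v \<in> X"
  by (induction rule: rtrancl_induct) (auto simp: adj_def)

lemma pth_rt: "pth E p \<Longrightarrow> set p \<subseteq> X \<Longrightarrow> (hd p, last p) \<in> (adj E X)\<^sup>*"
proof (induction p)
  case Nil then show ?case by (simp add: pth_def)
next
  case (Cons u p)
  show ?case
  proof (cases "p = []")
    case True then show ?thesis by simp
  next
    case False
    with Cons have "pth E p" "{u, hd p} \<in> E" by (auto simp: pth_Cons)
    with Cons False have "(hd p, last p) \<in> (adj E X)\<^sup>*" "(u, hd p) \<in> adj E X"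
      by (auto simp: adj_def)
    then show ?thesis using False by (simp add: converse_rtrancl_into_rtrancl)
  qed
qed

lemma pth_extend:
  assumes "pth E p" "set p \<subseteq> X" "{last p, w} \<in> E" "w \<in> X"
  shows "\<exists>q. pth E q \<and> set q \<subseteq> X \<and> hd q = hd p \<and> last q = w"
proof (cases "w \<in> set p")
  case True
  then obtain ys zs where p: "p = ys @ w # zs" by (meson split_list)
  have "pth E (ys @ [w])" using assms(1) p pth_appendD1[of E "ys @ [w]" zs] by simp
  moreover have "hd (ys @ [w]) = hd p" using p by (cases ys) auto
  ultimately show ?thesis using assms(2) p by (intro exI[of _ "ys @ [w]"]) auto
next
  case False
  have "pth E (p @ [w])" using assms False by (intro pth_append) auto
  then show ?thesis using assms by (intro exI[of _ "p @ [w]"]) (auto simp: pth_def)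
qed

lemma rt_pth: "(u, v) \<in> (adj E X)\<^sup>* \<Longrightarrow> u \<in> X \<Longrightarrow> \<exists>p. pth E p \<and> set p \<subseteq> X \<and> hd p = u \<and> last p = v"
proof (induction rule: rtrancl_induct)
  case base then show ?case by (intro exI[of _ "[u]"]) auto
next
  case (step y z)
  then obtain p where "pth E p" "set p \<subseteq> X" "hd p = u" "last p = y" by blast
  with step show ?case using pth_extend[of E p X z] by (auto simp: adj_def)
qed

lemma reachable_iff: "reachable X (induced E X) u v \<longleftrightarrow> (\<exists>p. pth E p \<and> set p \<subseteq> X \<and> hd p = u \<and> last p = v)"
  unfolding reachable_def is_path_induced by blast

lemma reachable_rt: "reachable X (induced E X) u v \<longleftrightarrow> u \<in> X \<and> (u, v) \<in> (adj E X)\<^sup>*"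
  unfolding reachable_iff
  by (metis (no_types, lifting) hd_in_set pth_def pth_rt rt_pth subsetD)

lemma connected_iff: "connected_graph X (induced E X) \<longleftrightarrow> (\<forall>u\<in>X. \<forall>v\<in>X. \<exists>p. pth E p \<and> set p \<subseteq> X \<and> hd p = u \<and> last p = v)"
  unfolding connected_graph_def reachable_iff by blast




context
  fixes E :: "'a set set" and S :: "'a set" and a b :: 'a and L :: "'a set" and x :: 'a
  assumes conn: "\<forall>y\<in>S. \<forall>u\<in>S-{y}. \<forall>v\<in>S-{y}. \<exists>p. pth E p \<and> set p \<subseteq> S-{y} \<and> hd p = u \<and> last p = v"
    and ab: "a \<in> S" "b \<in> S" "a \<noteq> b" and LS: "L \<subseteq> S - {a, b}" and xL: "x \<in> L"
    and clos: "\<And>u v. u \<in> L \<Longrightarrow> v \<in> S - {a, b} \<Longrightarrow> {u, v} \<in> E \<Longrightarrow> v \<in> L"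
    and Lconn: "\<And>u v. u \<in> L \<Longrightarrow> v \<in> L \<Longrightarrow> \<exists>p. pth E p \<and> set p \<subseteq> L \<and> hd p = u \<and> last p = v"
    and na: "\<exists>l\<in>L. {a, l} \<in> E" and nb: "\<exists>l\<in>L. {l, b} \<in> E"
begin

definition AP :: "'a list \<Rightarrow> bool" where
  "AP \<pi> \<longleftrightarrow> pth E \<pi> \<and> hd \<pi> = a \<and> last \<pi> = b \<and> set \<pi> \<subseteq> L \<union> {a, b}"

lemma AP_ex: "\<exists>\<pi>. AP \<pi>"
proof -
  obtain la lb where la: "la \<in> L" "{a, la} \<in> E" and lb: "lb \<in> L" "{lb, b} \<in> E" using na nb by blast
  obtain p where p: "pth E p" "set p \<subseteq> L" "hd p = la" "last p = lb" using Lconn[OF la(1) lb(1)] by blast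
  have "pth E (p @ [b])" using p lb LS by (intro pth_append) auto
  moreover have "hd (p @ [b]) = la" using p by (auto simp: pth_def)
  ultimately have "pth E (a # p @ [b])" using la LS ab p by (auto simp: pth_Cons)
  then show ?thesis using p unfolding AP_def by (intro exI[of _ "a # p @ [b]"]) auto
qed

lemma RR0:
  assumes "AP (A @ y # B1 @ t # B2)" "pth E \<sigma>" "hd \<sigma> = y" "last \<sigma> = t" "set \<sigma> \<subseteq> L \<union> {a, b}"
    "set \<sigma> \<inter> set (A @ y # B1 @ t # B2) \<subseteq> {y, t}"
  shows "AP (A @ \<sigma> @ B2)"
proof -
  let ?\<pi> = "A @ y # B1 @ t # B2"
  have P: "pth E ?\<pi>" and D: "distinct ?\<pi>" using assms(1) by (auto simp: AP_def pth_def)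
  have s1: "pth E (\<sigma> @ B2)"
  proof (cases "B2 = []")
    case True then show ?thesis using assms by simp
  next
    case False
    have "pth E B2" using P False pth_appendD2[of E "A @ y # B1 @ [t]" B2] by simp
    moreover have "{t, hd B2} \<in> E" using P False pth_append_edge[of E "A @ y # B1 @ [t]" B2] by simp
    moreover have "set \<sigma> \<inter> set B2 = {}" using assms(6) D by auto
    ultimately show ?thesis using assms by (intro pth_append) auto
  qed
  have s2: "pth E (A @ \<sigma> @ B2)"
  proof (cases "A = []")
    case True then show ?thesis using s1 by simp
  next
    case False
    have "pth E A" using P False pth_appendD1[of E A "y # B1 @ t # B2"] by simp
    moreover have "{last A, y} \<in> E" using P False pth_append_edge[of E A "y # B1 @ t # B2"] by simp
    moreover have "set A \<inter> set (\<sigma> @ B2) = {}" using assms(6) D by auto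
    moreover have "hd (\<sigma> @ B2) = y" using assms(2,3) by (auto simp: pth_def)
    ultimately show ?thesis using s1 by (intro pth_append[of E A "\<sigma> @ B2"]) auto
  qed
  have "hd (A @ \<sigma> @ B2) = a"
    using assms(1,2,3) by (cases A) (auto simp: AP_def pth_def)
  moreover have "last (A @ \<sigma> @ B2) = b"
    using assms(1,2,4) by (cases B2 rule: rev_cases) (auto simp: AP_def pth_def)
  moreover have "set (A @ \<sigma> @ B2) \<subseteq> L \<union> {a, b}" using assms(1,5) by (auto simp: AP_def)
  ultimately show ?thesis using s2 by (simp add: AP_def)
qed

lemma RR:
  assumes "AP \<pi>" "y \<in> set \<pi>" "t \<in> set \<pi>" "y \<noteq> t" "pth E \<sigma>" "hd \<sigma> = y" "last \<sigma> = t"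
    "set \<sigma> \<subseteq> L \<union> {a, b}" "set \<sigma> \<inter> set \<pi> \<subseteq> {y, t}"
  shows "\<exists>\<pi>'. AP \<pi>' \<and> set \<sigma> \<subseteq> set \<pi>'"
proof -
  obtain A B where \<pi>: "\<pi> = A @ y # B" using assms(2) by (meson split_list)
  have "t \<in> set A \<or> t \<in> set B" using \<pi> assms(3,4) by auto
  then show ?thesis
  proof
    assume "t \<in> set B"
    then obtain B1 B2 where "B = B1 @ t # B2" by (meson split_list)
    then show ?thesis using RR0[of A y B1 t B2 \<sigma>] assms \<pi> by auto
  next
    assume "t \<in> set A"
    then obtain A1 A2 where A: "A = A1 @ t # A2" by (meson split_list)
    have "pth E (rev \<sigma>)" using assms(5) by (rule pth_rev)
    moreover have "hd (rev \<sigma>) = t" "last (rev \<sigma>) = y" using assms(5,6,7)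
      by (auto simp: pth_def hd_rev last_rev)
    ultimately have "AP (A1 @ rev \<sigma> @ B)" using RR0[of A1 t A2 y B "rev \<sigma>"] assms \<pi> A by auto
    then show ?thesis by (intro exI[of _ "A1 @ rev \<sigma> @ B"]) auto
  qed
qed

lemma EXT:
  assumes "AP \<pi>" "y \<in> set \<pi>" "z \<notin> set \<pi>" "pth E \<sigma>" "hd \<sigma> = y" "last \<sigma> = z"
    "set \<sigma> \<subseteq> L \<union> {a, b}" "set \<sigma> \<inter> set \<pi> \<subseteq> {y}"
    "pth E (g @ [t])" "g \<noteq> []" "hd g = z" "set g \<inter> set \<pi> = {}" "t \<in> set \<pi>" "t \<noteq> y"
    "set (g @ [t]) \<subseteq> L \<union> {a, b}" "set \<sigma> \<inter> set (g @ [t]) \<subseteq> {z}"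
  shows "\<exists>\<pi>'. AP \<pi>' \<and> set \<sigma> \<subseteq> set \<pi>'"
proof -
  let ?s = "\<sigma> @ tl (g @ [t])"
  have dg: "distinct (g @ [t])" using assms(9) by (simp add: pth_def)
  have zt: "z \<notin> set (tl (g @ [t]))" using dg assms(10,11) by (cases g) auto
  have "set (tl (g @ [t])) \<subseteq> set (g @ [t])" by (cases g) auto
  then have "set \<sigma> \<inter> set (tl (g @ [t])) \<subseteq> {z}" using assms(16) by blast
  then have "set \<sigma> \<inter> set (tl (g @ [t])) = {}" using zt by blast
  then have pS: "pth E ?s"
    using assms(4,6,9,10,11) by (intro pth_join) auto
  have hS: "hd ?s = y" using assms(4,5) by (auto simp: pth_def)
  have lS: "last ?s = t" using assms(10) by (cases g) auto
  have sS: "set ?s \<subseteq> L \<union> {a, b}" using assms(7,15) by (cases g) auto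
  have iS: "set ?s \<inter> set \<pi> \<subseteq> {y, t}" using assms(8,12) by (cases g) auto
  obtain \<pi>' where "AP \<pi>'" "set ?s \<subseteq> set \<pi>'"
    using RR[OF assms(1,2,13) assms(14)[symmetric] pS hS lS sS iS] by blast
  then show ?thesis by auto
qed

lemma COMB:
  assumes "AP \<pi>" "y \<in> set \<pi>" "AP \<pi>2" "z \<in> set \<pi>2" "y \<noteq> z" "pth E \<sigma>" "hd \<sigma> = y" "last \<sigma> = z"
    "set \<sigma> \<subseteq> L \<union> {a, b}" "set \<sigma> \<inter> (set \<pi> \<union> set \<pi>2) \<subseteq> {y, z}"
  shows "\<exists>\<pi>'. AP \<pi>' \<and> set \<sigma> \<subseteq> set \<pi>'"
proof (cases "z \<in> set \<pi>")
  case True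
  then show ?thesis using RR[of \<pi> y z \<sigma>] assms by auto
next
  case False
  have aP: "a \<in> set \<pi>" "b \<in> set \<pi>" using assms(1) unfolding AP_def pth_def
    by (metis hd_in_set last_in_set)+
  obtain A B where \<pi>2: "\<pi>2 = A @ z # B" using assms(4) by (meson split_list)
  have P2: "pth E \<pi>2" "distinct \<pi>2" "set \<pi>2 \<subseteq> L \<union> {a, b}" using assms(3) by (auto simp: AP_def pth_def)
  have An: "A \<noteq> []" using assms(3) \<pi>2 False aP by (auto simp: AP_def)
  have Bn: "B \<noteq> []" using assms(3) \<pi>2 False aP by (auto simp: AP_def)
  have s1: "set \<sigma> \<inter> set \<pi> \<subseteq> {y}" using assms(10) False by auto
  have key: "\<exists>\<pi>'. AP \<pi>' \<and> set \<sigma> \<subseteq> set \<pi>'"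
    if tau: "pth E \<tau>" "hd \<tau> = z" "last \<tau> \<in> set \<pi>" "set \<tau> \<subseteq> set \<pi>2"
       and ny: "\<And>g t h. \<tau> = g @ t # h \<Longrightarrow> set g \<inter> set \<pi> = {} \<Longrightarrow> t \<in> set \<pi> \<Longrightarrow> t \<noteq> y" for \<tau>
  proof -
    have "\<exists>v\<in>set \<tau>. v \<in> set \<pi>" using tau(1,3) by (auto simp: pth_def)
    then obtain g t h where gth: "\<tau> = g @ t # h" "t \<in> set \<pi>" "\<forall>v\<in>set g. v \<notin> set \<pi>"
      using split_list_first_prop[of \<tau> "\<lambda>v. v \<in> set \<pi>"] by blast
    have gn: "g \<noteq> []" using gth tau(2) False by auto
    have hg: "hd g = z" using gth gn tau(2) by simp
    have pg: "pth E (g @ [t])" using tau(1) gth pth_appendD1[of E "g @ [t]" h] by simp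
    have g\<pi>: "set g \<inter> set \<pi> = {}" using gth by auto
    have ty: "t \<noteq> y" using ny[OF gth(1) g\<pi> gth(2)] .
    have sub: "set (g @ [t]) \<subseteq> set \<pi>2" using tau(4) gth by auto
    have "y \<notin> set (g @ [t])" using g\<pi> ty assms(2) by auto
    then have "set \<sigma> \<inter> set (g @ [t]) \<subseteq> {z}" using assms(10) sub by auto
    then show ?thesis using EXT[of \<pi> y z \<sigma> g t] assms(1,2,6-9) False s1 pg gn hg g\<pi> gth(2) ty sub P2(3)
      by blast
  qed
  let ?t1 = "z # rev A" and ?t2 = "z # B"
  have pt1: "pth E ?t1" using pth_rev[OF pth_appendD1[of E "A @ [z]" B]] P2(1) \<pi>2 by simp
  have pt2: "pth E ?t2" using pth_appendD2[of E A "z # B"] P2(1) \<pi>2 by simp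
  have l1: "last ?t1 = a" using An assms(3) \<pi>2 by (simp add: AP_def last_rev)
  have l2: "last ?t2 = b" using Bn assms(3) \<pi>2 by (simp add: AP_def)
  have dis: "set ?t1 \<inter> set ?t2 = {z}" using P2(2) \<pi>2 by auto
  show ?thesis
  proof (cases "\<exists>g h. ?t1 = g @ y # h \<and> set g \<inter> set \<pi> = {}")
    case False
    then have ny: "\<And>g t h. ?t1 = g @ t # h \<Longrightarrow> set g \<inter> set \<pi> = {} \<Longrightarrow> t \<in> set \<pi> \<Longrightarrow> t \<noteq> y"
      by blast
    have sb: "set ?t1 \<subseteq> set \<pi>2" using \<pi>2 by auto
    have la: "last ?t1 \<in> set \<pi>" using l1 aP by simp
    show ?thesis by (rule key[OF pt1 _ la sb ny]) simp
  next
    case True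
    then obtain g h where "?t1 = g @ y # h" by blast
    then have "y \<in> set ?t1" by (metis in_set_conv_decomp)
    then have yt2: "y \<notin> set ?t2" using dis assms(5) by auto
    have ny: "\<And>g t h. ?t2 = g @ t # h \<Longrightarrow> set g \<inter> set \<pi> = {} \<Longrightarrow> t \<in> set \<pi> \<Longrightarrow> t \<noteq> y"
      using yt2 by (metis in_set_conv_decomp)
    have sb: "set ?t2 \<subseteq> set \<pi>2" using \<pi>2 by auto
    have la: "last ?t2 \<in> set \<pi>" using l2 aP by simp
    show ?thesis by (rule key[OF pt2 _ la sb ny]) simp
  qed
qed

lemma STAY:
  "pth E (ys @ [z]) \<Longrightarrow> hd (ys @ [z]) \<in> L \<Longrightarrow> set (ys @ [z]) \<subseteq> S \<Longrightarrow> set ys \<inter> {a, b} = {}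
   \<Longrightarrow> set (ys @ [z]) \<subseteq> L \<union> {a, b}"
proof (induction ys)
  case Nil then show ?case by simp
next
  case (Cons u ys)
  have uL: "u \<in> L" using Cons.prems(2) by simp
  show ?case
  proof (cases ys)
    case Nil
    then have "{u, z} \<in> E" using Cons.prems(1) by (simp add: pth_Cons)
    then have "z \<in> L \<union> {a, b}" using clos[OF uL] Cons.prems(3) by auto
    then show ?thesis using uL Nil by simp
  next
    case (Cons v ys')
    then have "{u, v} \<in> E" "pth E (ys @ [z])" using Cons.prems(1) by (auto simp: pth_Cons)
    moreover have "v \<in> S - {a, b}" using Cons.prems(3,4) \<open>ys = v # ys'\<close> by auto
    ultimately have "v \<in> L" using clos[OF uL] by blast
    then have "set (ys @ [z]) \<subseteq> L \<union> {a, b}"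
      using Cons.IH \<open>pth E (ys @ [z])\<close> Cons.prems(3,4) \<open>ys = v # ys'\<close> by auto
    then show ?thesis using uL by simp
  qed
qed


lemma fan_AP: "\<exists>\<pi>. AP \<pi> \<and> x \<in> set \<pi>"
proof (rule ccontr)
  assume nx: "\<not> (\<exists>\<pi>. AP \<pi> \<and> x \<in> set \<pi>)"
  define R where "R = {v. \<exists>\<pi>. AP \<pi> \<and> v \<in> set \<pi>}"
  have xR: "x \<notin> R" using nx unfolding R_def by blast
  obtain \<pi>0 where AP0: "AP \<pi>0" using AP_ex by blast
  then have "\<pi>0 \<noteq> []" "hd \<pi>0 = a" "last \<pi>0 = b" unfolding AP_def pth_def by auto
  then have "a \<in> set \<pi>0" "b \<in> set \<pi>0" using hd_in_set last_in_set by metis+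
  then have aR: "a \<in> R" and bR: "b \<in> R" using AP0 unfolding R_def by blast+
  have APR: "AP \<pi> \<Longrightarrow> set \<pi> \<subseteq> R" for \<pi> unfolding R_def by blast
  have xS: "x \<in> S" using xL LS by auto
  obtain la where la: "la \<in> L" "{a, la} \<in> E" using na by blast
  obtain p where p: "pth E p" "set p \<subseteq> L" "hd p = x" "last p = la" using Lconn[OF xL la(1)] by blast
  have pa: "pth E (p @ [a])" using p la LS by (intro pth_append) (auto simp: insert_commute)
  have "\<exists>v\<in>set (p @ [a]). v \<in> R" using aR by auto
  then obtain ys y zs where Q1f: "p @ [a] = ys @ y # zs" "y \<in> R" "\<forall>v\<in>set ys. v \<notin> R"
    using split_list_first_prop[of "p @ [a]" "\<lambda>v. v \<in> R"] by blast
  have ysn: "ys \<noteq> []" using Q1f p xR by (cases p) (auto simp: pth_def)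
  have "hd (p @ [a]) = x" using p by (cases p) (auto simp: pth_def)
  then have hQ1: "hd ys = x" using Q1f(1) ysn by (metis hd_append2)
  have pQ1: "pth E (ys @ [y])" using pa Q1f pth_appendD1[of E "ys @ [y]" zs] by simp
  have "set (ys @ [y]) \<subseteq> set (p @ [a])" unfolding Q1f(1) by auto
  then have sQ1: "set (ys @ [y]) \<subseteq> L \<union> {a}" using p(2) by auto
  have yS: "y \<in> S" using sQ1 LS ab by auto
  have xy: "x \<noteq> y" using xR Q1f by auto
  define t where "t = (if y = a then b else a)"
  have ty: "t \<noteq> y" and tR: "t \<in> R" and tS: "t \<in> S" using ab aR bR by (auto simp: t_def)
  obtain p2 where p2: "pth E p2" "set p2 \<subseteq> S - {y}" "hd p2 = x" "last p2 = t"
    using conn yS xS xy ty tS by blast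
  have "p2 \<noteq> []" using p2(1) by (simp add: pth_def)
  then have "t \<in> set p2" using p2(4) last_in_set by fastforce
  then have "\<exists>v\<in>set p2. v \<in> R" using tR by blast
  then obtain ys2 z zs2 where Q2f: "p2 = ys2 @ z # zs2" "z \<in> R" "\<forall>v\<in>set ys2. v \<notin> R"
    using split_list_first_prop[of p2 "\<lambda>v. v \<in> R"] by blast
  have ys2n: "ys2 \<noteq> []" using Q2f p2 xR by (cases ys2) auto
  have hQ2: "hd (ys2 @ [z]) = x" using Q2f ys2n p2 by (cases ys2) auto
  have pQ2: "pth E (ys2 @ [z])" using p2 Q2f pth_appendD1[of E "ys2 @ [z]" zs2] by simp
  have zy: "z \<noteq> y" using Q2f p2 by auto
  have sQ2S: "set (ys2 @ [z]) \<subseteq> S - {y}" using Q2f p2 by auto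
  have "set ys2 \<inter> {a, b} = {}" using Q2f aR bR by auto
  then have sQ2: "set (ys2 @ [z]) \<subseteq> L \<union> {a, b}"
    using STAY[OF pQ2] hQ2 xL sQ2S by auto
  have zQ1: "z \<notin> set (ys @ [y])" using Q1f Q2f zy by auto
  have "hd ys2 = x" using hQ2 ys2n by simp
  then have "x \<in> set ys2" using ys2n hd_in_set by fastforce
  moreover have "x \<in> set ys" using hQ1 ysn hd_in_set by fastforce
  ultimately have "\<exists>v\<in>set (ys2 @ [z]). v \<in> set (ys @ [y])" by auto
  then obtain us w vs where W: "ys2 @ [z] = us @ w # vs" "w \<in> set (ys @ [y])" "\<forall>v\<in>set vs. v \<notin> set (ys @ [y])"
    using split_list_last_prop[of "ys2 @ [z]" "\<lambda>v. v \<in> set (ys @ [y])"] by blast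
  have vsn: "vs \<noteq> []" using W zQ1 by auto
  have "last (us @ w # vs) = z" using W(1)[symmetric] by simp
  then have lvs: "last vs = z" using vsn by simp
  have "w \<in> set (ys2 @ [z])" by (simp add: W(1))
  then have wy: "w \<noteq> y" using sQ2S by blast
  have wys: "w \<in> set ys" using W wy by auto
  have wR: "w \<notin> R" using wys Q1f by auto
  obtain c1 c2 where C: "ys = c1 @ w # c2" using wys by (meson split_list)
  have pc: "pth E (w # c2 @ [y])" using pQ1 C pth_appendD2[of E c1 "w # c2 @ [y]"] by simp
  have pvs: "pth E vs" using pQ2 W vsn pth_appendD2[of E "us @ [w]" vs] by simp
  have ewv: "{w, hd vs} \<in> E" using pQ2 W vsn pth_append_edge[of E "us @ [w]" vs] by simp
  define \<sigma> where "\<sigma> = rev (w # c2 @ [y]) @ vs"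
  have dcv: "set (rev (w # c2 @ [y])) \<inter> set vs = {}" using W C by auto
  have p\<sigma>: "pth E \<sigma>" unfolding \<sigma>_def using pth_rev[OF pc] pvs ewv dcv
    by (intro pth_append) auto
  have h\<sigma>: "hd \<sigma> = y" unfolding \<sigma>_def by simp
  have l\<sigma>: "last \<sigma> = z" unfolding \<sigma>_def using vsn lvs by simp
  have vsQ2: "set vs \<subseteq> set (ys2 @ [z])" using W by auto
  have s\<sigma>: "set \<sigma> \<subseteq> L \<union> {a, b}" unfolding \<sigma>_def using sQ1 sQ2 vsQ2 C by auto
  have w\<sigma>: "w \<in> set \<sigma>" unfolding \<sigma>_def by simp
  have r\<sigma>: "set \<sigma> \<inter> R \<subseteq> {y, z}" unfolding \<sigma>_def using Q1f Q2f C vsQ2 wR by auto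
  obtain \<pi>1 where \<pi>1: "AP \<pi>1" "y \<in> set \<pi>1" using Q1f(2) unfolding R_def by blast
  obtain \<pi>2 where \<pi>2: "AP \<pi>2" "z \<in> set \<pi>2" using Q2f(2) unfolding R_def by blast
  have "set \<sigma> \<inter> (set \<pi>1 \<union> set \<pi>2) \<subseteq> {y, z}" using r\<sigma> APR[OF \<pi>1(1)] APR[OF \<pi>2(1)] by blast
  then obtain \<pi>' where "AP \<pi>'" "set \<sigma> \<subseteq> set \<pi>'"
    using COMB[OF \<pi>1 \<pi>2 zy[symmetric] p\<sigma> h\<sigma> l\<sigma> s\<sigma>] by blast
  then have "w \<in> R" using w\<sigma> unfolding R_def by blast
  then show False using wR by simp
qed

lemma fan:
  "\<exists>p q. pth E p \<and> pth E q \<and> hd p = a \<and> hd q = b \<and> last p = x \<and> last q = x \<and>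
     set (tl p) \<subseteq> L \<and> set (tl q) \<subseteq> L \<and> set p \<inter> set q = {x}"
proof -
  obtain \<pi> where \<pi>: "AP \<pi>" "x \<in> set \<pi>" using fan_AP by blast
  obtain A B where AB: "\<pi> = A @ x # B" using \<pi>(2) by (meson split_list)
  have P: "pth E \<pi>" "distinct \<pi>" "hd \<pi> = a" "last \<pi> = b" "set \<pi> \<subseteq> L \<union> {a, b}"
    using \<pi>(1) by (auto simp: AP_def pth_def)
  have xa: "x \<noteq> a" "x \<noteq> b" using xL LS by auto
  have An: "A \<noteq> []" using AB P xa by auto
  have Bn: "B \<noteq> []" using AB P xa by auto
  let ?p = "A @ [x]" and ?q = "rev (x # B)"
  have pp: "pth E ?p" using P(1) AB pth_appendD1[of E "A @ [x]" B] by simp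
  have "pth E (x # B)" using P(1) AB pth_appendD2[of E A "x # B"] by simp
  then have pq: "pth E ?q" by (rule pth_rev)
  have hp: "hd ?p = a" using P(3) AB An by simp
  have hq: "hd ?q = b" using P(4) AB Bn by (simp add: hd_rev)
  have aA: "hd A = a" using hp An by simp
  have bB: "last B = b" using P(4) AB Bn by simp
  have "b \<in> set B" using Bn bB last_in_set by fastforce
  then have bnA: "b \<notin> set A" using P(2) AB by auto
  have "a \<in> set A" using An aA hd_in_set by fastforce
  then have anB: "a \<notin> set B" using P(2) AB by auto
  have "set (tl ?p) \<subseteq> L"
  proof -
    have "a \<notin> set (tl A)" using P(2) AB An aA by (cases A) auto
    moreover have "set (tl A) \<subseteq> set A" using An by (cases A) auto
    ultimately show ?thesis using P(5) AB An bnA xL by (cases A) auto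
  qed
  moreover have "set (tl ?q) \<subseteq> L"
  proof -
    obtain B' where B': "B = B' @ [b]" using Bn bB by (metis append_butlast_last_id)
    have "b \<notin> set B'" using P(2) AB B' by auto
    moreover have "tl ?q = rev B' @ [x]" using B' by simp
    ultimately show ?thesis using P(5) AB anB xL B' by auto
  qed
  moreover have "set ?p \<inter> set ?q = {x}" using P(2) AB by auto
  ultimately show ?thesis using pp pq hp hq by (intro exI[of _ ?p] exI[of _ ?q]) auto
qed

end



lemma vcomp_in: "x \<in> X \<Longrightarrow> vcomp E X x \<subseteq> X"
proof
  fix v assume "x \<in> X" "v \<in> vcomp E X x"
  then show "v \<in> X" using rt_in[of x v E X] unfolding vcomp_def by simp
qed

lemma vcomp_self: "x \<in> vcomp E X x" unfolding vcomp_def by simp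

lemma CR: "(u, v) \<in> (adj E X)\<^sup>* \<Longrightarrow> u \<in> vcomp E X x \<Longrightarrow> vcomp E X x \<subseteq> Y \<Longrightarrow> (u, v) \<in> (adj E Y)\<^sup>*"
proof (induction rule: rtrancl_induct)
  case base then show ?case by simp
next
  case (step w v)
  have "(x, w) \<in> (adj E X)\<^sup>*" using step(1,4) unfolding vcomp_def by simp
  then have "(x, v) \<in> (adj E X)\<^sup>*" using step(2) by simp
  then have "w \<in> Y" "v \<in> Y" using step(5) \<open>(x, w) \<in> _\<close> unfolding vcomp_def by auto
  then have "(w, v) \<in> adj E Y" using step(2) unfolding adj_def by auto
  then show ?case using step by simp
qed

lemma vcomp_sub:
  assumes "z \<in> vcomp E X x" "z \<in> vcomp E Y y" "vcomp E X x \<subseteq> Y"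
  shows "vcomp E X x \<subseteq> vcomp E Y y"
proof
  fix v assume v: "v \<in> vcomp E X x"
  have "(x, z) \<in> (adj E X)\<^sup>*" using assms(1) unfolding vcomp_def by simp
  then have "(z, x) \<in> (adj E X)\<^sup>*" by (rule adj_sym_rt)
  then have "(z, v) \<in> (adj E X)\<^sup>*" using v unfolding vcomp_def by simp
  then have "(z, v) \<in> (adj E Y)\<^sup>*" using CR[OF _ assms(1,3)] by blast
  then show "v \<in> vcomp E Y y" using assms(2) unfolding vcomp_def by simp
qed

lemma internal_sub: "internal p \<subseteq> set (tl p)"
  unfolding internal_def by (meson in_set_butlastD subsetI)

lemma last_notin_butlast: "distinct xs \<Longrightarrow> xs \<noteq> [] \<Longrightarrow> last xs \<notin> set (butlast xs)"
  by (metis append_butlast_last_id distinct_append disjoint_iff list.set_intros(1))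

lemma internal_nolast: "distinct p \<Longrightarrow> p \<noteq> [] \<Longrightarrow> last p \<notin> internal p"
proof -
  assume d: "distinct p" and n: "p \<noteq> []"
  show ?thesis
  proof (cases "tl p = []")
    case True then show ?thesis by (simp add: internal_def)
  next
    case False
    have "last (tl p) = last p" using False n by (metis last_tl)
    moreover have "distinct (tl p)" using d by (simp add: distinct_tl)
    ultimately show ?thesis using last_notin_butlast[of "tl p"] False unfolding internal_def by simp
  qed
qed

definition nbr :: "'a set set \<Rightarrow> 'a set \<Rightarrow> 'a set \<Rightarrow> 'a set" where
  "nbr E S L = {v \<in> S - L. \<exists>u\<in>L. {u, v} \<in> E}"

lemma NB:
  assumes conn: "\<forall>y\<in>S. \<forall>u\<in>S-{y}. \<forall>v\<in>S-{y}. \<exists>p. pth E p \<and> set p \<subseteq> S-{y} \<and> hd p = u \<and> last p = v"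
    and ab: "a \<in> S" "b \<in> S" "a \<noteq> b" and x: "x \<in> S - {a, b}"
  shows "\<exists>l\<in>vcomp E (S - {a, b}) x. {a, l} \<in> E"
proof -
  let ?L = "vcomp E (S - {a, b}) x"
  have LX: "?L \<subseteq> S - {a, b}" using vcomp_in[OF x] .
  obtain p where p: "pth E p" "set p \<subseteq> S - {b}" "hd p = x" "last p = a"
    using bspec[OF bspec[OF bspec[OF conn ab(2)]]] x ab by auto
  have "p \<noteq> []" using p by (simp add: pth_def)
  then have "a \<in> set p" using p(4) last_in_set by fastforce
  moreover have "a \<notin> ?L" using LX by auto
  ultimately have "\<exists>v\<in>set p. v \<notin> ?L" by blast
  then obtain ys r zs where sp: "p = ys @ r # zs" "r \<notin> ?L" "\<forall>v\<in>set ys. v \<in> ?L"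
    using split_list_first_prop[of p "\<lambda>v. v \<notin> ?L"] by blast
  have ysn: "ys \<noteq> []" using sp p vcomp_self[of x E "S - {a, b}"] by (cases ys) auto
  have e: "{last ys, r} \<in> E" using p(1) sp ysn pth_append_edge[of E ys "r # zs"] by simp
  have lL: "last ys \<in> ?L" using sp ysn by simp
  have rS: "r \<in> S - {b}" using sp p by auto
  have "r = a"
  proof (rule ccontr)
    assume "r \<noteq> a"
    then have "r \<in> S - {a, b}" using rS by auto
    then have "(last ys, r) \<in> adj E (S - {a, b})" using e lL LX unfolding adj_def by auto
    then have "r \<in> ?L" using lL unfolding vcomp_def by simp
    then show False using sp by simp
  qed
  then show ?thesis using lL e by (auto simp: insert_commute)
qed




lemma bicon_two:
  assumes "biconnected_component V E S" "two_vertex_cut S (induced E S) a b"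
  shows "two_connected S (induced E S)"
proof -
  have "\<not> (\<exists>u v. S = {u, v} \<and> bridge V E {u, v})"
  proof
    assume "\<exists>u v. S = {u, v} \<and> bridge V E {u, v}"
    then obtain u v where "S = {u, v}" by blast
    moreover have "a \<in> S" "b \<in> S" "a \<noteq> b" using assms(2) by (auto simp: two_vertex_cut_def)
    ultimately have "S - {a, b} = {}" by auto
    then have "connected_graph (S - {a, b}) (induced (induced E S) (S - {a, b}))"
      unfolding connected_graph_def by (metis empty_iff)
    then show False using assms(2) by (simp add: two_vertex_cut_def)
  qed
  then show ?thesis using assms(1) by (auto simp: biconnected_component_def)
qed

lemma two_conn:
  assumes "two_connected S (induced E S)"
  shows "\<forall>y\<in>S. \<forall>u\<in>S-{y}. \<forall>v\<in>S-{y}. \<exists>p. pth E p \<and> set p \<subseteq> S-{y} \<and> hd p = u \<and> last p = v"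
proof (intro ballI)
  fix y u v assume y: "y \<in> S" and uv: "u \<in> S - {y}" "v \<in> S - {y}"
  have "connected_graph (S - {y}) (induced (induced E S) (S - {y}))"
    using assms y by (simp add: two_connected_def)
  then have "connected_graph (S - {y}) (induced E (S - {y}))"
    using induced_induced[of "S - {y}" S E] by simp
  then show "\<exists>p. pth E p \<and> set p \<subseteq> S-{y} \<and> hd p = u \<and> last p = v"
    using uv unfolding connected_iff by blast
qed

definition good :: "'a set \<Rightarrow> 'a set set \<Rightarrow> 'a set \<Rightarrow> 'a set \<Rightarrow> 'a set \<Rightarrow> 'a \<Rightarrow> 'a \<Rightarrow> 'a \<Rightarrow> bool" where
  "good V E M S W \<mu> c x \<longleftrightarrow> c \<in> W \<and> \<mu> \<in> W \<and> two_vertex_cut S (induced E S) \<mu> c \<and>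
     agent V E M S x \<and> x \<in> S - {\<mu>, c} \<and>
     (\<forall>y\<in>W - {\<mu>, c}. \<not> reachable (S - {\<mu>, c}) (induced E (S - {\<mu>, c})) y x)"

lemma vantage_good:
  assumes "vantage V E M S W \<mu>" "\<not> agent V E M S \<mu>"
  shows "\<exists>c x. good V E M S W \<mu> c x"
proof -
  obtain a b x where ab: "\<mu> \<in> {a, b}" "a \<in> W" "b \<in> W" "two_vertex_cut S (induced E S) a b"
    "agent V E M S x" "x \<in> S - {a, b}"
    "\<forall>y\<in>W - {a, b}. \<not> reachable (S - {a, b}) (induced E (S - {a, b})) y x"
    using assms unfolding vantage_def by (meson insert_iff)
  show ?thesis
  proof (cases "\<mu> = a")
    case True then show ?thesis using ab unfolding good_def by blast
  next
    case False
    then have "\<mu> = b" using ab(1) by simp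
    moreover have "two_vertex_cut S (induced E S) b a" using ab(4)
      unfolding two_vertex_cut_def by (auto simp: insert_commute)
    moreover have "{a, b} = {b, a}" by auto
    ultimately show ?thesis using ab unfolding good_def by metis
  qed
qed

lemma good_props:
  assumes g: "good V E M S W \<mu> c x" and S2: "two_connected S (induced E S)"
  defines "L \<equiv> vcomp E (S - {\<mu>, c}) x"
  shows "x \<in> L" "L \<subseteq> S - {\<mu>, c}" "L \<inter> W = {}" "nbr E S L = {\<mu>, c}"
    "\<exists>p q. pth E p \<and> pth E q \<and> hd p = \<mu> \<and> hd q = c \<and> last p = x \<and> last q = x \<and>
     set (tl p) \<subseteq> L \<and> set (tl q) \<subseteq> L \<and> set p \<inter> set q = {x}"
proof -
  let ?X = "S - {\<mu>, c}"
  have gg: "c \<in> W" "\<mu> \<in> W" "\<mu> \<in> S" "c \<in> S" "\<mu> \<noteq> c" "agent V E M S x" "x \<in> ?X"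
    "\<forall>y\<in>W - {\<mu>, c}. \<not> reachable ?X (induced E ?X) y x"
    using g unfolding good_def two_vertex_cut_def by auto
  have conn: "\<forall>y\<in>S. \<forall>u\<in>S-{y}. \<forall>v\<in>S-{y}. \<exists>p. pth E p \<and> set p \<subseteq> S-{y} \<and> hd p = u \<and> last p = v"
    using two_conn[OF S2] .
  show xL: "x \<in> L" unfolding L_def by (rule vcomp_self)
  show LX: "L \<subseteq> ?X" unfolding L_def using vcomp_in[OF gg(7)] .
  show LW: "L \<inter> W = {}"
  proof (rule ccontr)
    assume "L \<inter> W \<noteq> {}"
    then obtain v where v: "v \<in> L" "v \<in> W" by blast
    then have vX: "v \<in> ?X" using LX by auto
    have "(x, v) \<in> (adj E ?X)\<^sup>*" using v unfolding L_def vcomp_def by simp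
    then have "(v, x) \<in> (adj E ?X)\<^sup>*" by (rule adj_sym_rt)
    then have "reachable ?X (induced E ?X) v x" using vX reachable_rt by fast
    then show False using gg(8) v(2) vX by blast
  qed
  have clos: "\<And>u v. u \<in> L \<Longrightarrow> v \<in> ?X \<Longrightarrow> {u, v} \<in> E \<Longrightarrow> v \<in> L"
  proof -
    fix u v assume "u \<in> L" "v \<in> ?X" "{u, v} \<in> E"
    then have "(x, u) \<in> (adj E ?X)\<^sup>*" "(u, v) \<in> adj E ?X" using LX unfolding L_def vcomp_def adj_def by auto
    then show "v \<in> L" unfolding L_def vcomp_def by simp
  qed
  have Lconn: "\<And>u v. u \<in> L \<Longrightarrow> v \<in> L \<Longrightarrow> \<exists>p. pth E p \<and> set p \<subseteq> L \<and> hd p = u \<and> last p = v"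
  proof -
    fix u v assume uv: "u \<in> L" "v \<in> L"
    have "L \<subseteq> vcomp E L u" using vcomp_sub[of u E ?X x L u] uv(1) vcomp_self[of u E L] L_def by blast
    then have "(u, v) \<in> (adj E L)\<^sup>*" using uv(2) unfolding vcomp_def by auto
    then show "\<exists>p. pth E p \<and> set p \<subseteq> L \<and> hd p = u \<and> last p = v" using rt_pth uv(1) by fast
  qed
  have na: "\<exists>l\<in>L. {\<mu>, l} \<in> E" using NB[OF conn gg(3,4,5,7)] unfolding L_def .
  have "\<exists>l\<in>vcomp E (S - {c, \<mu>}) x. {c, l} \<in> E" using NB[OF conn gg(4,3) gg(5)[symmetric]] gg(7)
    by (simp add: insert_commute)
  then have nc: "\<exists>l\<in>L. {l, c} \<in> E" unfolding L_def by (simp add: insert_commute)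
  show "nbr E S L = {\<mu>, c}"
  proof
    show "nbr E S L \<subseteq> {\<mu>, c}"
    proof
      fix v assume "v \<in> nbr E S L"
      then obtain u where "v \<in> S" "v \<notin> L" "u \<in> L" "{u, v} \<in> E" unfolding nbr_def by blast
      then show "v \<in> {\<mu>, c}" using clos by blast
    qed
  next
    have "\<mu> \<notin> L" "c \<notin> L" using LX by auto
    then show "{\<mu>, c} \<subseteq> nbr E S L" using na nc gg(3,4) unfolding nbr_def by (auto simp: insert_commute)
  qed
  show "\<exists>p q. pth E p \<and> pth E q \<and> hd p = \<mu> \<and> hd q = c \<and> last p = x \<and> last q = x \<and>
     set (tl p) \<subseteq> L \<and> set (tl q) \<subseteq> L \<and> set p \<inter> set q = {x}"
    by (rule fan[where ?E = E and ?S = S and ?a = \<mu> and ?b = c and ?L = L and ?x = x, OF conn gg(3,4,5) LX xL clos Lconn na nc])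
qed

lemma set_hd_tl: "p \<noteq> [] \<Longrightarrow> set p = insert (hd p) (set (tl p))" by (cases p) auto

theorem mainTheorem2:
  fixes V :: "'a set" and E :: "'a set set" and M :: "'a set" and S :: "'a set"
    and W :: "'a set" and F :: "'a set set"
  assumes "graph V E" and "V \<noteq> {}" and "connected_graph V E" and "M \<subseteq> V"
    and "biconnected_component V E S"
    and "triconnected_component S (induced E S) W F"
  shows "\<exists>P :: 'a \<Rightarrow> 'a list. \<forall>\<mu>. vantage V E M S W \<mu> \<longrightarrow>
           external_path V E M S W \<mu> (P \<mu>) \<and>
           (agent V E M S \<mu> \<longrightarrow> P \<mu> = [\<mu>]) \<and>
           (\<forall>\<nu>. vantage V E M S W \<nu> \<and> \<nu> \<noteq> \<mu> \<longrightarrow> internally_disjoint (P \<mu>) (P \<nu>))"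
proof -
  have SV: "S \<subseteq> V" using assms(5) unfolding biconnected_component_def by blast
  define cf where "cf \<mu> = (SOME c. \<exists>x. good V E M S W \<mu> c x)" for \<mu>
  define xf where "xf \<mu> = (SOME x. good V E M S W \<mu> (cf \<mu>) x)" for \<mu>
  define Lf where "Lf \<mu> = vcomp E (S - {\<mu>, cf \<mu>}) (xf \<mu>)" for \<mu>
  define Q where "Q L f \<longleftrightarrow> (\<forall>u\<in>nbr E S L. pth E (f u) \<and> hd (f u) = u \<and> agent V E M S (last (f u)) \<and>
      set (tl (f u)) \<subseteq> L \<and> (\<forall>v\<in>nbr E S L. v \<noteq> u \<longrightarrow> set (f u) \<inter> set (f v) \<subseteq> {last (f u)}))"
    for L and f :: "'a \<Rightarrow> 'a list"
  define FP where "FP L = (SOME f. Q L f)" for L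
  define P where "P \<mu> = (if agent V E M S \<mu> then [\<mu>] else FP (Lf \<mu>) \<mu>)" for \<mu>
  have NA: "good V E M S W \<mu> (cf \<mu>) (xf \<mu>) \<and> two_connected S (induced E S)"
    if "vantage V E M S W \<mu>" "\<not> agent V E M S \<mu>" for \<mu>
  proof -
    have "\<exists>c x. good V E M S W \<mu> c x" using vantage_good[OF that] .
    then have "\<exists>x. good V E M S W \<mu> (cf \<mu>) x" unfolding cf_def by (rule someI_ex)
    then have g: "good V E M S W \<mu> (cf \<mu>) (xf \<mu>)" unfolding xf_def by (rule someI_ex)
    then have "two_vertex_cut S (induced E S) \<mu> (cf \<mu>)" unfolding good_def by blast
    then have "two_connected S (induced E S)" by (rule bicon_two[OF assms(5)])
    then show ?thesis using g by blast
  qed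
  have LP: "Q (Lf \<mu>) (FP (Lf \<mu>)) \<and> \<mu> \<in> nbr E S (Lf \<mu>) \<and> Lf \<mu> \<inter> W = {} \<and> Lf \<mu> \<subseteq> S"
    if "vantage V E M S W \<mu>" "\<not> agent V E M S \<mu>" for \<mu>
  proof -
    have g: "good V E M S W \<mu> (cf \<mu>) (xf \<mu>)" and S2: "two_connected S (induced E S)" using NA that by auto
    note gp = good_props[OF g S2, folded Lf_def]
    obtain p q where pq: "pth E p" "pth E q" "hd p = \<mu>" "hd q = cf \<mu>" "last p = xf \<mu>" "last q = xf \<mu>"
      "set (tl p) \<subseteq> Lf \<mu>" "set (tl q) \<subseteq> Lf \<mu>" "set p \<inter> set q = {xf \<mu>}" using gp(5) by blast
    have ag: "agent V E M S (xf \<mu>)" and ne: "\<mu> \<noteq> cf \<mu>" using g unfolding good_def two_vertex_cut_def by auto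
    have "Q (Lf \<mu>) (\<lambda>u. if u = \<mu> then p else q)"
      unfolding Q_def gp(4) using pq ag ne by auto
    then have "Q (Lf \<mu>) (FP (Lf \<mu>))" unfolding FP_def by (rule someI[of "Q (Lf \<mu>)"])
    then show ?thesis using gp(2,3,4) by auto
  qed
  have H1: "pth E (P \<mu>) \<and> hd (P \<mu>) = \<mu> \<and> agent V E M S (last (P \<mu>)) \<and> set (tl (P \<mu>)) \<subseteq> Lf \<mu>"
    if "vantage V E M S W \<mu>" "\<not> agent V E M S \<mu>" for \<mu>
    using LP[OF that] that(2) unfolding P_def Q_def by auto
  have H2: "internal (P \<mu>) \<inter> set (P \<nu>) = {}"
    if "vantage V E M S W \<mu>" "\<not> agent V E M S \<mu>" "vantage V E M S W \<nu>" "\<not> agent V E M S \<nu>" "\<mu> \<noteq> \<nu>"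
    for \<mu> \<nu>
  proof (cases "Lf \<mu> \<inter> Lf \<nu> = {}")
    case True
    have "set (tl (P \<mu>)) \<subseteq> Lf \<mu>" using H1[OF that(1,2)] by simp
    then have "internal (P \<mu>) \<subseteq> Lf \<mu>" by (rule subset_trans[OF internal_sub])
    moreover have "set (P \<nu>) \<subseteq> insert \<nu> (Lf \<nu>)"
    proof -
      have h: "P \<nu> \<noteq> []" "hd (P \<nu>) = \<nu>" "set (tl (P \<nu>)) \<subseteq> Lf \<nu>" using H1[OF that(3,4)] by (auto simp: pth_def)
      have "set (P \<nu>) = insert (hd (P \<nu>)) (set (tl (P \<nu>)))" by (rule set_hd_tl[OF h(1)])
      then show ?thesis using h(2,3) by auto
    qed
    moreover have "\<nu> \<in> W" using that(3) unfolding vantage_def by blast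
    ultimately show ?thesis using True LP[OF that(1,2)] by blast
  next
    case False
    then obtain z where z: "z \<in> Lf \<mu>" "z \<in> Lf \<nu>" by blast
    have g1: "good V E M S W \<mu> (cf \<mu>) (xf \<mu>)" using NA that(1,2) by blast
    have g2: "good V E M S W \<nu> (cf \<nu>) (xf \<nu>)" using NA that(3,4) by blast
    have W1: "\<mu> \<in> W" "cf \<mu> \<in> W" using g1 unfolding good_def by auto
    have W2: "\<nu> \<in> W" "cf \<nu> \<in> W" using g2 unfolding good_def by auto
    have L1: "Lf \<mu> \<inter> W = {}" "Lf \<mu> \<subseteq> S" using LP[OF that(1,2)] by auto
    have L2: "Lf \<nu> \<inter> W = {}" "Lf \<nu> \<subseteq> S" using LP[OF that(3,4)] by auto
    have s1: "Lf \<mu> \<subseteq> S - {\<nu>, cf \<nu>}" using L1 W2 by auto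
    have s2: "Lf \<nu> \<subseteq> S - {\<mu>, cf \<mu>}" using L2 W1 by auto
    have "Lf \<mu> \<subseteq> Lf \<nu>" using vcomp_sub[of z E "S - {\<mu>, cf \<mu>}" "xf \<mu>" "S - {\<nu>, cf \<nu>}" "xf \<nu>"] z s1
      unfolding Lf_def by blast
    moreover have "Lf \<nu> \<subseteq> Lf \<mu>" using vcomp_sub[of z E "S - {\<nu>, cf \<nu>}" "xf \<nu>" "S - {\<mu>, cf \<mu>}" "xf \<mu>"] z s2
      unfolding Lf_def by blast
    ultimately have eq: "Lf \<mu> = Lf \<nu>" by blast
    let ?L = "Lf \<mu>"
    have q: "Q ?L (FP ?L)" "\<mu> \<in> nbr E S ?L" "\<nu> \<in> nbr E S ?L" using LP[OF that(1,2)] LP[OF that(3,4)] eq by auto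
    have Pm: "P \<mu> = FP ?L \<mu>" "P \<nu> = FP ?L \<nu>" using that(2,4) eq unfolding P_def by auto
    have "set (P \<mu>) \<inter> set (P \<nu>) \<subseteq> {last (P \<mu>)}" using q that(5) Pm unfolding Q_def by auto
    moreover have "last (P \<mu>) \<notin> internal (P \<mu>)" using H1[OF that(1,2)] internal_nolast
      by (auto simp: pth_def)
    moreover have "internal (P \<mu>) \<subseteq> set (P \<mu>)" using internal_sub[of "P \<mu>"]
      by (metis list.set_sel(2) subset_iff tl_Nil empty_iff list.set(1))
    ultimately show ?thesis by blast
  qed
  have H3: "internal (P \<mu>) \<inter> set (P \<nu>) = {}"
    if "vantage V E M S W \<mu>" "\<not> agent V E M S \<mu>" "vantage V E M S W \<nu>" "agent V E M S \<nu>" for \<mu> \<nu>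
  proof -
    have "set (tl (P \<mu>)) \<subseteq> Lf \<mu>" using H1[OF that(1,2)] by simp
    then have "internal (P \<mu>) \<subseteq> Lf \<mu>" by (rule subset_trans[OF internal_sub])
    moreover have "P \<nu> = [\<nu>]" using that(4) unfolding P_def by simp
    moreover have "\<nu> \<in> W" using that(3) unfolding vantage_def by blast
    ultimately show ?thesis using LP[OF that(1,2)] by auto
  qed
  have H4: "internal (P \<mu>) = {}" if "agent V E M S \<mu>" for \<mu>
    using that unfolding P_def internal_def by simp
  show ?thesis
  proof (intro exI[of _ P] allI impI)
    fix \<mu> assume v: "vantage V E M S W \<mu>"
    have A: "external_path V E M S W \<mu> (P \<mu>)"
    proof (cases "agent V E M S \<mu>")
      case True
      then have "\<mu> \<in> S" unfolding agent_def by blast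
      then show ?thesis using True SV unfolding external_path_def P_def is_path_pth by auto
    next
      case False
      note h = H1[OF v False]
      have h': "P \<mu> \<noteq> []" using h by (simp add: pth_def)
      have "set (P \<mu>) = insert (hd (P \<mu>)) (set (tl (P \<mu>)))" by (rule set_hd_tl[OF h'])
      then have "set (P \<mu>) \<subseteq> insert \<mu> (Lf \<mu>)" using h by auto
      moreover have "\<mu> \<in> S" using NA[OF v False] unfolding good_def two_vertex_cut_def by blast
      ultimately have "set (P \<mu>) \<subseteq> V" using LP[OF v False] SV by blast
      then show ?thesis using h LP[OF v False] unfolding external_path_def is_path_pth by blast
    qed
    have B: "agent V E M S \<mu> \<longrightarrow> P \<mu> = [\<mu>]" unfolding P_def by simp
    have C: "\<forall>\<nu>. vantage V E M S W \<nu> \<and> \<nu> \<noteq> \<mu> \<longrightarrow> internally_disjoint (P \<mu>) (P \<nu>)"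
    proof (intro allI impI)
      fix \<nu> assume n: "vantage V E M S W \<nu> \<and> \<nu> \<noteq> \<mu>"
      show "internally_disjoint (P \<mu>) (P \<nu>)"
        unfolding internally_disjoint_def
        using H2[OF v _ conjunct1[OF n]] H2[OF conjunct1[OF n] _ v] H3[OF v _ conjunct1[OF n]]
          H3[OF conjunct1[OF n] _ v] H4 n by blast
    qed
    show "external_path V E M S W \<mu> (P \<mu>) \<and> (agent V E M S \<mu> \<longrightarrow> P \<mu> = [\<mu>]) \<and>
           (\<forall>\<nu>. vantage V E M S W \<nu> \<and> \<nu> \<noteq> \<mu> \<longrightarrow> internally_disjoint (P \<mu>) (P \<nu>))"
      using A B C by blast
  qed
qed


end
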